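(* Let a WIFS satisfy the $\Phi$-FNC for an iteration rule $\Phi$, and let $\mathcal L$ be a loop class of its transition graph with vertices $v_1,\dots,v_k$. For $1\le i,j\le k$ let $M_{i,j}=\sum_e T(e)$, the sum over all edges $e$ of $\mathcal G$ from $v_i$ to $v_j$ (the zero matrix of the appropriate size if there are none), and let $M=M(\mathcal L)$ be the block matrix $(M_{i,j})_{1\le i,j\le k}$. If the non-negative matrix $M$ is irreducible, then $\mathcal L$ is an irreducible loop class.
   Context: Setting. A weighted iterated function system (WIFS) $(S_i,p_i)_{i\in\mathcal I}$ consists of a finite index set $\mathcal I$, maps $S_i(x)=r_ix+d_i$ on $\mathbb R$ with $0<|r_i|<1$, and probabilities $p_i>0$ with $\sum_i p_i=1$. Its self-similar set $K$ is the unique nonempty compact set with $K=\bigcup_i S_i(K)$ and its self-similar measure $\mu$ is the unique Borel probability measure with $\mu(E)=\sum_i p_i\,\mu(S_i^{-1}(E))$. Standing assumptions: $K$ is not a singleton and its convex hull is $[0,1]$. For a finite word $\sigma=\sigma_1\cdots\sigma_n$ over $\mathcal I$ (the set of all finite words, including the empty word, is $\mathcal I^*$) put $S_\sigma=S_{\sigma_1}\circ\cdots\circ S_{\sigma_n}$, $p_\sigma=p_{\sigma_1}\cdots p_{\sigma_n}$ (identity and $1$ for the empty word). For a map $f$, $f\mu:=\mu\circ f^{-1}$. Iteration rules and net intervals. Fix a total order on the affine bijections $x\mapsto ax+b$ ($a\ne0$) of $\mathbb R$. For a closed interval $J$ let $T_J(x)=rx+c$ ($r>0$) be the map with $T_J([0,1])=J$.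 An iteration rule $\Phi$ assigns to each finite strictly increasing tuple $v=(f_1,\dots,f_m)$ of such maps a tuple $\Phi(v)=(\mathcal C_1,\dots,\mathcal C_m)$ of finite subsets of $\mathcal I^*$ such that for each $i$ and all large $n$ every word of length $n$ has a unique prefix in $\mathcal C_i$. Children of a pair $(\Delta,v)$, $\Delta=[a,b]$: let $\mathcal Y=\{T_\Delta\circ f_i\circ S_\tau:1\le i\le m,\tau\in\mathcal C_i\}$ and list $\{a,b\}\cup\{g(z):g\in\mathcal Y,z\in\{0,1\},g(z)\in\Delta\}$ as $a=y_1<\dots<y_{k+1}=b$; the children are the pairs $(\Delta',v')$ with $\Delta'=[y_j,y_{j+1}]$, $(y_j,y_{j+1})\cap K\ne\emptyset$, and $v'$ the increasing tuple of the distinct maps $T_{\Delta'}^{-1}\circ g$, $g\in\mathcal Y$, $g(K)\cap(y_j,y_{j+1})\ne\emptyset$. Let $\mathcal N_0=\{([0,1],(\mathrm{id}))\}$ and $\mathcal N_{n+1}$ the set of children of members of $\mathcal N_n$; second components are neighbour sets. $\Phi$ must also satisfy: (i) $\max\{r\,\mathrm{diam}\Delta:(\Delta,v)\in\mathcal N_n,(x\mapsto rx+c)\in v\}\to0$; (ii) if $f_1\neq f_2$ lie in a neighbour set then $f_1\circ S_\sigma\ne f_2$ for all $\sigma\in\mathcal I^*$. (Convention: a pair whose only child has the same interval is replaced by that child.) Transition graph. Children and their data depend only on $v$. The transition graph $\mathcal G$ has as vertices the neighbour sets occurring, root $(\mathrm{id})$, and one edge $e$ from $v$ to $v'$ for each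 child $(\Delta',v')$ of a pair $(\Delta,v)$ (distinguished by the relative position of $\Delta'$ in $\Delta$), with transition matrix $T(e)$: for $v=(f_1,\dots,f_m)$, $v'=(g_1,\dots,g_n)$, $\Phi(v)=(\mathcal C_1,\dots,\mathcal C_m)$, $T(e)$ is the $m\times n$ matrix with $T(e)_{i,j}=\frac{f_i\mu((0,1))}{g_j\mu((0,1))}\sum p_\omega$ over $\omega\in\mathcal C_i$ with $T_\Delta\circ f_i\circ S_\omega=T_{\Delta'}\circ g_j$. For a path $\eta=(e_1,\dots,e_n)$, $T(\eta)=T(e_1)\cdots T(e_n)$ and $\|A\|$ = sum of entries. The WIFS satisfies the $\Phi$-FNC if $\mathcal G$ is finite. A loop class is an induced subgraph $\mathcal L$ of $\mathcal G$ that is strongly connected, has at least one edge, and is maximal with these properties. $\mathcal L$ is irreducible if there are a finite set $\mathcal H$ of paths and a constant $C\ge1$ such that for all finite paths $\eta_1,\eta_2$ in $\mathcal L$ there is $\gamma\in\mathcal H$ with $\eta_1\gamma\eta_2$ a path and $C^{-1}\|T(\eta_1)\|\|T(\eta_2)\|\le\|T(\eta_1\gamma\eta_2)\|\le C\|T(\eta_1)\|\|T(\eta_2)\|$. A non-negative square matrix $M$ is irreducible if for all indices $i,j$ there is $n\ge1$ with $(M^n)_{i,j}>0$. *)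

theory Defs
  imports "HOL-Probability.Probability" "Jordan_Normal_Form.Matrix"
begin

section \<open>Affine maps x \<mapsto> a x + b, represented as pairs (a, b)\<close>

type_synonym aff = "real \<times> real"

definition aff_app :: "aff \<Rightarrow> real \<Rightarrow> real" where
  "aff_app f x = fst f * x + snd f"

definition aff_comp :: "aff \<Rightarrow> aff \<Rightarrow> aff" where
  "aff_comp f g = (fst f * fst g, fst f * snd g + snd f)"

definition aff_inv :: "aff \<Rightarrow> aff" where
  "aff_inv f = (1 / fst f, - snd f / fst f)"

definition aff_id :: aff where
  "aff_id = (1, 0)"

text \<open>Closed interval [a,b] represented as the pair (a,b), a < b.
  T_J is the increasing affine map with T_J([0,1]) = J.\<close>
definition Tint :: "real \<times> real \<Rightarrow> aff" where
  "Tint J = (snd J - fst J, fst J)"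

section \<open>The WIFS\<close>

definition wifs :: "('i::finite \<Rightarrow> real) \<Rightarrow> ('i \<Rightarrow> real) \<Rightarrow> ('i \<Rightarrow> real) \<Rightarrow> bool" where
  "wifs r d p \<longleftrightarrow> (\<forall>i. 0 < \<bar>r i\<bar> \<and> \<bar>r i\<bar> < 1) \<and> (\<forall>i. p i > 0) \<and> (\<Sum>i\<in>UNIV. p i) = 1"

definition Smap :: "('i \<Rightarrow> real) \<Rightarrow> ('i \<Rightarrow> real) \<Rightarrow> 'i \<Rightarrow> aff" where
  "Smap r d i = (r i, d i)"

definition Sword :: "('i \<Rightarrow> real) \<Rightarrow> ('i \<Rightarrow> real) \<Rightarrow> 'i list \<Rightarrow> aff" where
  "Sword r d w = foldr (\<lambda>i acc. aff_comp (Smap r d i) acc) w aff_id"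

definition pword :: "('i \<Rightarrow> real) \<Rightarrow> 'i list \<Rightarrow> real" where
  "pword p w = prod_list (map p w)"

definition ssset :: "('i::finite \<Rightarrow> real) \<Rightarrow> ('i \<Rightarrow> real) \<Rightarrow> real set" where
  "ssset r d = (THE K. compact K \<and> K \<noteq> {} \<and> K = (\<Union>i. aff_app (Smap r d i) ` K))"

definition ssmeas :: "('i::finite \<Rightarrow> real) \<Rightarrow> ('i \<Rightarrow> real) \<Rightarrow> ('i \<Rightarrow> real) \<Rightarrow> real measure" where
  "ssmeas r d p = (THE M. prob_space M \<and> sets M = sets borel \<and>
     (\<forall>E\<in>sets borel. measure M E = (\<Sum>i\<in>UNIV. p i * measure M (aff_app (Smap r d i) -` E))))"

definition fmu01 :: "('i::finite \<Rightarrow> real) \<Rightarrow> ('i \<Rightarrow> real) \<Rightarrow> ('i \<Rightarrow> real) \<Rightarrow> aff \<Rightarrow> real" where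
  "fmu01 r d p f = measure (ssmeas r d p) (aff_app f -` {0<..<1})"

section \<open>Iteration rules, children, net intervals\<close>

definition slt :: "aff rel \<Rightarrow> aff \<Rightarrow> aff \<Rightarrow> bool" where
  "slt lo f g \<longleftrightarrow> (f, g) \<in> lo"

definition incr_tuple :: "aff rel \<Rightarrow> aff list \<Rightarrow> bool" where
  "incr_tuple lo v \<longleftrightarrow> sorted_wrt (slt lo) v \<and> (\<forall>f\<in>set v. fst f \<noteq> 0)"

definition sorted_tuple :: "aff rel \<Rightarrow> aff set \<Rightarrow> aff list" where
  "sorted_tuple lo A = (THE xs. sorted_wrt (slt lo) xs \<and> set xs = A)"

definition prefix_code :: "'i list set \<Rightarrow> bool" where
  "prefix_code C \<longleftrightarrow> finite C \<and>
     (\<exists>N. \<forall>n\<ge>N. \<forall>w::'i list. length w = n \<longrightarrow> (\<exists>!\<tau>. \<tau> \<in> C \<and> take (length \<tau>) w = \<tau>))"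

definition Ymaps :: "('i \<Rightarrow> real) \<Rightarrow> ('i \<Rightarrow> real) \<Rightarrow> (aff list \<Rightarrow> 'i list set list)
     \<Rightarrow> real \<times> real \<Rightarrow> aff list \<Rightarrow> aff set" where
  "Ymaps r d Phi \<Delta> v = {aff_comp (Tint \<Delta>) (aff_comp (v ! i) (Sword r d \<tau>)) | i \<tau>.
       i < length v \<and> \<tau> \<in> Phi v ! i}"

definition endpts :: "('i \<Rightarrow> real) \<Rightarrow> ('i \<Rightarrow> real) \<Rightarrow> (aff list \<Rightarrow> 'i list set list)
     \<Rightarrow> real \<times> real \<Rightarrow> aff list \<Rightarrow> real set" where
  "endpts r d Phi \<Delta> v = {fst \<Delta>, snd \<Delta>} \<union>
     {aff_app g z | g z. g \<in> Ymaps r d Phi \<Delta> v \<and> z \<in> {0, 1} \<and> aff_app g z \<in> {fst \<Delta>..snd \<Delta>}}"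

definition is_child :: "('i::finite \<Rightarrow> real) \<Rightarrow> ('i \<Rightarrow> real) \<Rightarrow> aff rel \<Rightarrow> (aff list \<Rightarrow> 'i list set list)
     \<Rightarrow> (real \<times> real) \<times> aff list \<Rightarrow> (real \<times> real) \<times> aff list \<Rightarrow> bool" where
  "is_child r d lo Phi x c \<longleftrightarrow>
     (let \<Delta> = fst x; v = snd x; \<Delta>' = fst c; y = fst \<Delta>'; y' = snd \<Delta>';
          E = endpts r d Phi \<Delta> v; K = ssset r d in
      y \<in> E \<and> y' \<in> E \<and> y < y' \<and> \<not> (\<exists>z\<in>E. y < z \<and> z < y') \<and>
      {y<..<y'} \<inter> K \<noteq> {} \<and>
      snd c = sorted_tuple lo {aff_comp (aff_inv (Tint \<Delta>')) g | g.
                  g \<in> Ymaps r d Phi \<Delta> v \<and> aff_app g ` K \<inter> {y<..<y'} \<noteq> {}})"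

text \<open>The levels N_n of net intervals with neighbour sets.\<close>
primrec netlevel :: "('i::finite \<Rightarrow> real) \<Rightarrow> ('i \<Rightarrow> real) \<Rightarrow> aff rel \<Rightarrow> (aff list \<Rightarrow> 'i list set list)
     \<Rightarrow> nat \<Rightarrow> ((real \<times> real) \<times> aff list) set" where
  "netlevel r d lo Phi 0 = {((0, 1), [aff_id])}"
| "netlevel r d lo Phi (Suc n) = {c. \<exists>x\<in>netlevel r d lo Phi n. is_child r d lo Phi x c}"

definition iteration_rule :: "('i::finite \<Rightarrow> real) \<Rightarrow> ('i \<Rightarrow> real) \<Rightarrow> aff rel
     \<Rightarrow> (aff list \<Rightarrow> 'i list set list) \<Rightarrow> bool" where
  "iteration_rule r d lo Phi \<longleftrightarrow>
     (\<forall>v. incr_tuple lo v \<longrightarrow> length (Phi v) = length v \<and> (\<forall>C\<in>set (Phi v). prefix_code C)) \<and>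
     (\<forall>\<epsilon>>0. \<exists>N. \<forall>n\<ge>N. \<forall>x\<in>netlevel r d lo Phi n. \<forall>f\<in>set (snd x).
         \<bar>fst f\<bar> * (snd (fst x) - fst (fst x)) < \<epsilon>) \<and>
     (\<forall>n. \<forall>x\<in>netlevel r d lo Phi n. \<forall>f1\<in>set (snd x). \<forall>f2\<in>set (snd x).
         f1 \<noteq> f2 \<longrightarrow> (\<forall>\<sigma>. aff_comp f1 (Sword r d \<sigma>) \<noteq> f2))"

section \<open>Transition graph\<close>

text \<open>Edges are triples (v, relative position T_Delta^{-1}(Delta') of the child interval, v').\<close>
type_synonym edge = "aff list \<times> (real \<times> real) \<times> aff list"

definition tg_vertices :: "('i::finite \<Rightarrow> real) \<Rightarrow> ('i \<Rightarrow> real) \<Rightarrow> aff rel \<Rightarrow> (aff list \<Rightarrow> 'i list set list)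
     \<Rightarrow> aff list set" where
  "tg_vertices r d lo Phi = {v. \<exists>n \<Delta>. (\<Delta>, v) \<in> netlevel r d lo Phi n}"

definition rel_pos :: "real \<times> real \<Rightarrow> real \<times> real \<Rightarrow> real \<times> real" where
  "rel_pos \<Delta> \<Delta>' = ((fst \<Delta>' - fst \<Delta>) / (snd \<Delta> - fst \<Delta>), (snd \<Delta>' - fst \<Delta>) / (snd \<Delta> - fst \<Delta>))"

definition tg_edges :: "('i::finite \<Rightarrow> real) \<Rightarrow> ('i \<Rightarrow> real) \<Rightarrow> aff rel \<Rightarrow> (aff list \<Rightarrow> 'i list set list)
     \<Rightarrow> edge set" where
  "tg_edges r d lo Phi = {(v, rel_pos \<Delta> \<Delta>', v') | v v' \<Delta> \<Delta>' n.
      (\<Delta>, v) \<in> netlevel r d lo Phi n \<and> is_child r d lo Phi (\<Delta>, v) (\<Delta>', v')}"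

definition esrc :: "edge \<Rightarrow> aff list" where "esrc e = fst e"
definition etgt :: "edge \<Rightarrow> aff list" where "etgt e = snd (snd e)"

text \<open>For e = (v, pos, v') coming from a child (Delta',v') of (Delta,v) with
  pos = T_Delta^{-1}(Delta'), the condition T_Delta o f_i o S_omega = T_Delta' o g_j is equivalent to
  f_i o S_omega = T_pos o g_j.\<close>
definition tmat :: "('i::finite \<Rightarrow> real) \<Rightarrow> ('i \<Rightarrow> real) \<Rightarrow> ('i \<Rightarrow> real) \<Rightarrow> (aff list \<Rightarrow> 'i list set list)
     \<Rightarrow> edge \<Rightarrow> real mat" where
  "tmat r d p Phi e = (let v = fst e; pos = fst (snd e); v' = snd (snd e) in
     mat (length v) (length v') (\<lambda>(i, j).
        fmu01 r d p (v ! i) / fmu01 r d p (v' ! j) *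
        (\<Sum>\<omega>\<in>{\<omega>\<in>Phi v ! i. aff_comp (v ! i) (Sword r d \<omega>) = aff_comp (Tint pos) (v' ! j)}. pword p \<omega>)))"

definition FNC :: "('i::finite \<Rightarrow> real) \<Rightarrow> ('i \<Rightarrow> real) \<Rightarrow> aff rel \<Rightarrow> (aff list \<Rightarrow> 'i list set list) \<Rightarrow> bool" where
  "FNC r d lo Phi \<longleftrightarrow> finite (tg_vertices r d lo Phi) \<and> finite (tg_edges r d lo Phi)"

section \<open>Paths, loop classes, irreducibility\<close>

definition is_path :: "edge set \<Rightarrow> edge list \<Rightarrow> bool" where
  "is_path E es \<longleftrightarrow> set es \<subseteq> E \<and> (\<forall>k. Suc k < length es \<longrightarrow> etgt (es ! k) = esrc (es ! Suc k))"

definition induced_edges :: "edge set \<Rightarrow> aff list set \<Rightarrow> edge set" where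
  "induced_edges E W = {e\<in>E. esrc e \<in> W \<and> etgt e \<in> W}"

definition strongly_connected :: "edge set \<Rightarrow> aff list set \<Rightarrow> bool" where
  "strongly_connected E W \<longleftrightarrow> (\<forall>u\<in>W. \<forall>w\<in>W. u = w \<or>
     (\<exists>es. es \<noteq> [] \<and> is_path (induced_edges E W) es \<and> esrc (hd es) = u \<and> etgt (last es) = w))"

definition loop_class :: "aff list set \<Rightarrow> edge set \<Rightarrow> aff list set \<Rightarrow> bool" where
  "loop_class V E W \<longleftrightarrow> W \<subseteq> V \<and> strongly_connected E W \<and> induced_edges E W \<noteq> {} \<and>
     (\<forall>W'. W \<subset> W' \<and> W' \<subseteq> V \<longrightarrow> \<not> (strongly_connected E W' \<and> induced_edges E W' \<noteq> {}))"

fun prodT :: "(edge \<Rightarrow> real mat) \<Rightarrow> edge list \<Rightarrow> real mat" where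
  "prodT T [] = 0\<^sub>m 0 0"
| "prodT T [e] = T e"
| "prodT T (e # es) = T e * prodT T es"

definition mnorm :: "real mat \<Rightarrow> real" where
  "mnorm A = (\<Sum>i<dim_row A. \<Sum>j<dim_col A. A $$ (i, j))"

definition irreducible_loop_class :: "edge set \<Rightarrow> (edge \<Rightarrow> real mat) \<Rightarrow> aff list set \<Rightarrow> bool" where
  "irreducible_loop_class E T W \<longleftrightarrow>
     (\<exists>H C. finite H \<and> (\<forall>\<gamma>\<in>H. is_path E \<gamma>) \<and> C \<ge> 1 \<and>
       (\<forall>\<eta>1 \<eta>2. \<eta>1 \<noteq> [] \<and> \<eta>2 \<noteq> [] \<and> is_path (induced_edges E W) \<eta>1 \<and> is_path (induced_edges E W) \<eta>2 \<longrightarrow>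
          (\<exists>\<gamma>\<in>H. is_path E (\<eta>1 @ \<gamma> @ \<eta>2) \<and>
             mnorm (prodT T \<eta>1) * mnorm (prodT T \<eta>2) / C \<le> mnorm (prodT T (\<eta>1 @ \<gamma> @ \<eta>2)) \<and>
             mnorm (prodT T (\<eta>1 @ \<gamma> @ \<eta>2)) \<le> C * mnorm (prodT T \<eta>1) * mnorm (prodT T \<eta>2))))"

definition Msum :: "edge set \<Rightarrow> (edge \<Rightarrow> real mat) \<Rightarrow> aff list \<Rightarrow> aff list \<Rightarrow> real mat" where
  "Msum E T v w = mat (length v) (length w)
     (\<lambda>(i, j). \<Sum>e\<in>{e\<in>E. esrc e = v \<and> etgt e = w}. T e $$ (i, j))"

definition blk_off :: "aff list list \<Rightarrow> nat \<Rightarrow> nat" where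
  "blk_off vs k = sum_list (map length (take k vs))"

definition blk_idx :: "aff list list \<Rightarrow> nat \<Rightarrow> nat" where
  "blk_idx vs q = (THE k. k < length vs \<and> blk_off vs k \<le> q \<and> q < blk_off vs (Suc k))"

definition block_matrix :: "edge set \<Rightarrow> (edge \<Rightarrow> real mat) \<Rightarrow> aff list list \<Rightarrow> real mat" where
  "block_matrix E T vs = (let n = sum_list (map length vs) in
     mat n n (\<lambda>(q, s). let a = blk_idx vs q; b = blk_idx vs s in
        Msum E T (vs ! a) (vs ! b) $$ (q - blk_off vs a, s - blk_off vs b)))"

definition irreducible_mat :: "real mat \<Rightarrow> bool" where
  "irreducible_mat A \<longleftrightarrow> (\<forall>i<dim_row A. \<forall>j<dim_row A. \<exists>n\<ge>1. (A ^\<^sub>m n) $$ (i, j) > 0)"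

end

theory Submission
  imports Defs
begin

definition colS :: "real mat \<Rightarrow> nat \<Rightarrow> real" where
  "colS A k = (\<Sum>i<dim_row A. A $$ (i, k))"
definition rowS :: "real mat \<Rightarrow> nat \<Rightarrow> real" where
  "rowS A k = (\<Sum>j<dim_col A. A $$ (k, j))"
definition nn :: "real mat \<Rightarrow> bool" where
  "nn A \<longleftrightarrow> (\<forall>i<dim_row A. \<forall>j<dim_col A. A $$ (i, j) \<ge> 0)"

lemma mult_entry:
  assumes "A \<in> carrier_mat m p" "B \<in> carrier_mat p l" "i < m" "j < l"
  shows "(A * B) $$ (i, j) = (\<Sum>k<p. A $$ (i, k) * B $$ (k, j))"
  using assms by (auto simp: scalar_prod_def atLeast0LessThan intro!: sum.cong)

lemma mnorm_mult:
  assumes "A \<in> carrier_mat m p" "B \<in> carrier_mat p l"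
  shows "mnorm (A * B) = (\<Sum>k<p. colS A k * rowS B k)"
proof -
  have d: "dim_row (A * B) = m" "dim_col (A * B) = l" using assms by auto
  have "mnorm (A * B) = (\<Sum>i<m. \<Sum>j<l. \<Sum>k<p. A $$ (i, k) * B $$ (k, j))"
    unfolding mnorm_def d using assms by (auto simp del: index_mult_mat simp: mult_entry[OF assms(1,2)] intro!: sum.cong)
  also have "\<dots> = (\<Sum>i<m. \<Sum>k<p. \<Sum>j<l. A $$ (i, k) * B $$ (k, j))"
    by (intro sum.cong refl sum.swap)
  also have "\<dots> = (\<Sum>k<p. \<Sum>i<m. \<Sum>j<l. A $$ (i, k) * B $$ (k, j))"
    by (rule sum.swap)
  also have "\<dots> = (\<Sum>k<p. colS A k * rowS B k)"
    using assms unfolding colS_def rowS_def sum_distrib_right sum_distrib_left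
    apply simp by (intro sum.cong refl sum.swap)
  finally show ?thesis .
qed

lemma colS_mult:
  assumes "A \<in> carrier_mat m p" "B \<in> carrier_mat p l" "c < l"
  shows "colS (A * B) c = (\<Sum>b<p. colS A b * B $$ (b, c))"
proof -
  have d: "dim_row (A * B) = m" using assms by auto
  have "colS (A * B) c = (\<Sum>i<m. \<Sum>b<p. A $$ (i, b) * B $$ (b, c))"
    unfolding colS_def d using assms by (auto simp del: index_mult_mat simp: mult_entry[OF assms(1,2)] intro!: sum.cong)
  also have "\<dots> = (\<Sum>b<p. colS A b * B $$ (b, c))"
    using assms by (simp add: colS_def sum.swap[of _ "{..<p}"] sum_distrib_right)
  finally show ?thesis .
qed

lemma mnorm_col: "mnorm A = (\<Sum>k<dim_col A. colS A k)"
  unfolding mnorm_def colS_def by (rule sum.swap)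

lemma mnorm_row: "mnorm A = (\<Sum>k<dim_row A. rowS A k)"
  unfolding mnorm_def rowS_def by simp

lemma nn_mult:
  assumes "A \<in> carrier_mat m p" "B \<in> carrier_mat p l" "nn A" "nn B"
  shows "nn (A * B)"
proof -
  have d: "dim_row (A * B) = m" "dim_col (A * B) = l" using assms by auto
  show ?thesis
  using assms unfolding nn_def d by (auto simp del: index_mult_mat simp: mult_entry[OF assms(1,2)] intro!: sum_nonneg)
qed

lemma nn_colS: "nn A \<Longrightarrow> k < dim_col A \<Longrightarrow> colS A k \<ge> 0"
  unfolding nn_def colS_def by (auto intro!: sum_nonneg)
lemma nn_rowS: "nn A \<Longrightarrow> k < dim_row A \<Longrightarrow> rowS A k \<ge> 0"
  unfolding nn_def rowS_def by (auto intro!: sum_nonneg)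
lemma nn_mnorm: "nn A \<Longrightarrow> mnorm A \<ge> 0"
  unfolding nn_def mnorm_def by (auto intro!: sum_nonneg)
lemma nn_entry_le_mnorm:
  assumes "nn A" "i < dim_row A" "j < dim_col A"
  shows "A $$ (i, j) \<le> mnorm A"
proof -
  have "A $$ (i, j) \<le> (\<Sum>j<dim_col A. A $$ (i, j))"
    using assms unfolding nn_def by (intro member_le_sum) auto
  also have "\<dots> \<le> mnorm A" unfolding mnorm_def
    using assms unfolding nn_def
    by (intro member_le_sum[of i "{..<dim_row A}" "\<lambda>i. \<Sum>j<dim_col A. A $$ (i, j)"]) (auto intro!: sum_nonneg)
  finally show ?thesis .
qed

definition chain :: "edge list \<Rightarrow> bool" where
  "chain es \<longleftrightarrow> (\<forall>k. Suc k < length es \<longrightarrow> etgt (es ! k) = esrc (es ! Suc k))"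

lemma is_path_chain: "is_path E es \<longleftrightarrow> set es \<subseteq> E \<and> chain es"
  unfolding is_path_def chain_def by simp

lemma chain_Nil[simp]: "chain []" unfolding chain_def by simp
lemma chain_single[simp]: "chain [e]" unfolding chain_def by simp

lemma chain_Cons: "chain (e # es) \<longleftrightarrow> (es \<noteq> [] \<longrightarrow> etgt e = esrc (hd es)) \<and> chain es"
  unfolding chain_def
  apply (cases es)
   apply simp
  by (auto simp: nth_Cons split: nat.splits)

lemma chain_append:
  "xs \<noteq> [] \<Longrightarrow> ys \<noteq> [] \<Longrightarrow> chain xs \<Longrightarrow> chain ys \<Longrightarrow> etgt (last xs) = esrc (hd ys) \<Longrightarrow> chain (xs @ ys)"
proof (induction xs)
  case (Cons x xs)
  show ?case
  proof (cases "xs = []")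
    case True then show ?thesis using Cons by (simp add: chain_Cons)
  next
    case False
    then have "chain (xs @ ys)" using Cons by (simp add: chain_Cons)
    then show ?thesis using Cons False by (simp add: chain_Cons)
  qed
qed simp

lemma chain_appendD:
  "chain (xs @ ys) \<Longrightarrow> chain xs \<and> chain ys"
  by (induction xs) (auto simp: chain_Cons)

lemma prodT_Cons: "es \<noteq> [] \<Longrightarrow> prodT T (e # es) = T e * prodT T es"
  by (cases es) auto

lemma prodT_carrier:
  assumes "\<And>e. T e \<in> carrier_mat (length (esrc e)) (length (etgt e))" "es \<noteq> []"
  shows "prodT T es \<in> carrier_mat (length (esrc (hd es))) (length (etgt (last es)))"
  using assms(2)
proof (induction es)
  case (Cons e es)
  then show ?case using assms(1)[of e] by (cases "es = []") (auto simp: prodT_Cons)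
qed simp

lemma prodT_append:
  assumes "\<And>e. T e \<in> carrier_mat (length (esrc e)) (length (etgt e))"
  shows "xs \<noteq> [] \<Longrightarrow> ys \<noteq> [] \<Longrightarrow> chain xs \<Longrightarrow> chain ys \<Longrightarrow> etgt (last xs) = esrc (hd ys) \<Longrightarrow> prodT T (xs @ ys) = prodT T xs * prodT T ys"
proof (induction xs)
  case (Cons x xs)
  show ?case
  proof (cases "xs = []")
    case True then show ?thesis using Cons by (simp add: prodT_Cons)
  next
    case False
    have ch: "chain xs" "etgt x = esrc (hd xs)" "etgt (last xs) = esrc (hd ys)" using Cons.prems False by (auto simp: chain_Cons)
    have "prodT T ((x # xs) @ ys) = T x * (prodT T xs * prodT T ys)"
      using Cons ch False by (simp add: prodT_Cons)
    also have "\<dots> = (T x * prodT T xs) * prodT T ys"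
      using assms[of x] prodT_carrier[OF assms False] prodT_carrier[OF assms Cons.prems(2)] ch
      by (intro assoc_mult_mat[symmetric]) auto
    finally show ?thesis using False by (simp add: prodT_Cons)
  qed
qed simp

lemma prodT_nn:
  assumes "\<And>e. T e \<in> carrier_mat (length (esrc e)) (length (etgt e))" "\<And>e. nn (T e)"
  shows "es \<noteq> [] \<Longrightarrow> chain es \<Longrightarrow> nn (prodT T es)"
proof (induction es)
  case (Cons e es)
  show ?case
  proof (cases "es = []")
    case True then show ?thesis using assms(2)[of e] by simp
  next
    case False
    then have "chain es" "etgt e = esrc (hd es)" using Cons.prems by (auto simp: chain_Cons)
    have c1: "T e \<in> carrier_mat (length (esrc e)) (length (etgt e))" by (rule assms(1))
    have c2: "prodT T es \<in> carrier_mat (length (etgt e)) (length (etgt (last es)))"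
      using prodT_carrier[OF assms(1) False] \<open>etgt e = esrc (hd es)\<close> by simp
    have "nn (prodT T es)" using Cons.IH False \<open>chain es\<close> by simp
    then show ?thesis using nn_mult[OF c1 c2 assms(2)[of e]] False
      by (simp add: prodT_Cons)
  qed
qed simp

lemma off_Suc: "k < length vs \<Longrightarrow> blk_off vs (Suc k) = blk_off vs k + length (vs ! k)"
  unfolding blk_off_def by (simp add: take_Suc_conv_app_nth)

lemma off_le_Suc: "blk_off vs k \<le> blk_off vs (Suc k)"
  by (cases "k < length vs") (simp add: off_Suc, simp add: blk_off_def)

lemma off_mono: "k \<le> k' \<Longrightarrow> blk_off vs k \<le> blk_off vs k'"
  by (rule lift_Suc_mono_le[of "blk_off vs"]) (auto simp: off_le_Suc)

lemma off_len: "blk_off vs (length vs) = sum_list (map length vs)"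
  unfolding blk_off_def by simp

lemma blk_exists: "m \<le> length vs \<Longrightarrow> q < blk_off vs m \<Longrightarrow> \<exists>a<m. blk_off vs a \<le> q \<and> q < blk_off vs (Suc a)"
proof (induction m)
  case 0 then show ?case by (simp add: blk_off_def)
next
  case (Suc m)
  show ?case
  proof (cases "q < blk_off vs m")
    case True then show ?thesis using Suc.IH[OF Suc_leD[OF Suc.prems(1)] True] by (meson less_SucI)
  next
    case False then show ?thesis using Suc by (intro exI[of _ m]) auto
  qed
qed

lemma blk_idx_eq:
  assumes "a < length vs" "blk_off vs a \<le> q" "q < blk_off vs (Suc a)"
  shows "blk_idx vs q = a"
  unfolding blk_idx_def
proof (rule the_equality)
  show "a < length vs \<and> blk_off vs a \<le> q \<and> q < blk_off vs (Suc a)" using assms by simp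
next
  fix k assume k: "k < length vs \<and> blk_off vs k \<le> q \<and> q < blk_off vs (Suc k)"
  show "k = a"
  proof (rule ccontr)
    assume "k \<noteq> a"
    then have "Suc k \<le> a \<or> Suc a \<le> k" by auto
    then show False using off_mono[of "Suc k" a vs] off_mono[of "Suc a" k vs] k assms by auto
  qed
qed

lemma blk_idx_props:
  assumes "q < sum_list (map length vs)"
  shows "blk_idx vs q < length vs \<and> blk_off vs (blk_idx vs q) \<le> q \<and>
         q < blk_off vs (blk_idx vs q) + length (vs ! blk_idx vs q)"
proof -
  obtain a where a: "a < length vs" "blk_off vs a \<le> q" "q < blk_off vs (Suc a)"
    using blk_exists[of "length vs" vs q] assms off_len by auto
  then have "blk_idx vs q = a" by (rule blk_idx_eq)
  then show ?thesis using a off_Suc[of a vs] by simp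
qed

lemma blk_idx_at:
  assumes "a < length vs" "b < length (vs ! a)"
  shows "blk_idx vs (blk_off vs a + b) = a"
  using assms by (intro blk_idx_eq) (auto simp: off_Suc)

lemma blk_at_lt:
  assumes "a < length vs" "b < length (vs ! a)"
  shows "blk_off vs a + b < sum_list (map length vs)"
proof -
  have "blk_off vs a + b < blk_off vs (Suc a)" using assms by (simp add: off_Suc)
  also have "\<dots> \<le> blk_off vs (length vs)" using assms by (intro off_mono) auto
  finally show ?thesis by (simp add: off_len)
qed

lemma block_carrier: "block_matrix E T vs \<in> carrier_mat (sum_list (map length vs)) (sum_list (map length vs))"
  unfolding block_matrix_def Let_def by simp

lemma block_entry:
  assumes "q < sum_list (map length vs)" "s < sum_list (map length vs)"
  shows "block_matrix E T vs $$ (q, s) =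
     (\<Sum>e\<in>{e\<in>E. esrc e = vs ! blk_idx vs q \<and> etgt e = vs ! blk_idx vs s}.
        T e $$ (q - blk_off vs (blk_idx vs q), s - blk_off vs (blk_idx vs s)))"
proof -
  have "q - blk_off vs (blk_idx vs q) < length (vs ! blk_idx vs q)"
       "s - blk_off vs (blk_idx vs s) < length (vs ! blk_idx vs s)"
    using blk_idx_props[OF assms(1)] blk_idx_props[OF assms(2)] by auto
  then show ?thesis using assms unfolding block_matrix_def Let_def Msum_def by simp
qed

lemma sum_pos_ex: "(sum f S :: real) > 0 \<Longrightarrow> \<exists>x\<in>S. f x > 0"
  by (meson not_less sum_nonpos)

locale setting =
  fixes E :: "edge set" and T :: "edge \<Rightarrow> real mat" and vs :: "aff list list"
  assumes Tdim: "\<And>e. T e \<in> carrier_mat (length (esrc e)) (length (etgt e))"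
    and Tnn: "\<And>e. nn (T e)"
begin

abbreviation "N \<equiv> sum_list (map length vs)"
abbreviation "M \<equiv> block_matrix E T vs"
abbreviation "bi \<equiv> blk_idx vs"
abbreviation "off \<equiv> blk_off vs"

lemma M_nn: "nn M"
proof -
  have "M $$ (q, s) \<ge> 0" if "q < N" "s < N" for q s
  proof -
    have "T e $$ (q - off (bi q), s - off (bi s)) \<ge> 0"
      if "esrc e = vs ! bi q" "etgt e = vs ! bi s" for e
      using Tnn[of e] Tdim[of e] blk_idx_props[OF \<open>q < N\<close>] blk_idx_props[OF \<open>s < N\<close>] that
      unfolding nn_def by auto
    then show ?thesis using block_entry[OF that, of E T] by (auto intro!: sum_nonneg)
  qed
  then show ?thesis using block_carrier[of E T vs] unfolding nn_def by auto
qed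

lemma Mpow_nn: "nn (M ^\<^sub>m n)"
proof (induction n)
  case 0 then show ?case using block_carrier[of E T vs] by (auto simp: nn_def one_mat_def)
next
  case (Suc n)
  then show ?case using block_carrier[of E T vs] M_nn
    by (auto intro!: nn_mult[of _ N N _ N])
qed

lemma path_lemma:
  assumes "q < N" "s < N" "(M ^\<^sub>m Suc n) $$ (q, s) > 0"
  shows "\<exists>\<gamma>. \<gamma> \<noteq> [] \<and> set \<gamma> \<subseteq> E \<and> chain \<gamma> \<and> esrc (hd \<gamma>) = vs ! bi q \<and>
     etgt (last \<gamma>) = vs ! bi s \<and> prodT T \<gamma> $$ (q - off (bi q), s - off (bi s)) > 0"
  using assms(2,3)
proof (induction n arbitrary: s)
  case 0
  have "M ^\<^sub>m Suc 0 = M" using block_carrier[of E T vs] by simp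
  then have "M $$ (q, s) > 0" using 0 by simp
  then have "(\<Sum>e\<in>{e\<in>E. esrc e = vs ! bi q \<and> etgt e = vs ! bi s}.
        T e $$ (q - off (bi q), s - off (bi s))) > 0"
    using block_entry[OF assms(1) 0(1), of E T] by simp
  from sum_pos_ex[OF this] obtain e where "e \<in> E" "esrc e = vs ! bi q" "etgt e = vs ! bi s"
     "T e $$ (q - off (bi q), s - off (bi s)) > 0" by blast
  then show ?case by (intro exI[of _ "[e]"]) auto
next
  case (Suc n)
  have MC: "M \<in> carrier_mat N N" by (rule block_carrier)
  have e1: "M ^\<^sub>m Suc (Suc n) = M ^\<^sub>m Suc n * M" by (rule pow_mat.simps(2))
  have e2: "(M ^\<^sub>m Suc n * M) $$ (q, s) = (\<Sum>t<N. (M ^\<^sub>m Suc n) $$ (q, t) * M $$ (t, s))"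
    by (rule mult_entry[OF pow_carrier_mat[OF MC, of "Suc n"] MC assms(1) Suc.prems(1)])
  have "(\<Sum>t<N. (M ^\<^sub>m Suc n) $$ (q, t) * M $$ (t, s)) > 0"
    using Suc.prems(2) unfolding e1 e2 .
  from sum_pos_ex[OF this] obtain t where t: "t < N" "(M ^\<^sub>m Suc n) $$ (q, t) * M $$ (t, s) > 0"
    by blast
  have "(M ^\<^sub>m Suc n) $$ (q, t) \<ge> 0" "M $$ (t, s) \<ge> 0"
    using Mpow_nn[of "Suc n"] M_nn MC t(1) assms(1) Suc.prems(1) unfolding nn_def by auto
  then have p1: "(M ^\<^sub>m Suc n) $$ (q, t) > 0" and p2: "M $$ (t, s) > 0"
    using t(2) by (auto simp: zero_less_mult_iff)
  obtain \<gamma> where g: "\<gamma> \<noteq> []" "set \<gamma> \<subseteq> E" "chain \<gamma>" "esrc (hd \<gamma>) = vs ! bi q"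
     "etgt (last \<gamma>) = vs ! bi t" "prodT T \<gamma> $$ (q - off (bi q), t - off (bi t)) > 0"
    using Suc.IH[OF t(1) p1] by blast
  have "(\<Sum>e\<in>{e\<in>E. esrc e = vs ! bi t \<and> etgt e = vs ! bi s}.
        T e $$ (t - off (bi t), s - off (bi s))) > 0"
    using block_entry[OF t(1) Suc.prems(1), of E T] p2 by simp
  from sum_pos_ex[OF this] obtain e where e: "e \<in> E" "esrc e = vs ! bi t" "etgt e = vs ! bi s"
     "T e $$ (t - off (bi t), s - off (bi s)) > 0" by blast
  have prod: "prodT T (\<gamma> @ [e]) = prodT T \<gamma> * T e"
    using prodT_append[OF Tdim g(1) _ g(3)] g e by simp
  define lq lt ls where "lq = q - off (bi q)" and "lt = t - off (bi t)" and "ls = s - off (bi s)"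
  have lq: "lq < length (vs ! bi q)" and lt: "lt < length (vs ! bi t)" and ls: "ls < length (vs ! bi s)"
    using blk_idx_props[OF assms(1)] blk_idx_props[OF t(1)] blk_idx_props[OF Suc.prems(1)]
    unfolding lq_def lt_def ls_def by auto
  have C1: "prodT T \<gamma> \<in> carrier_mat (length (vs ! bi q)) (length (vs ! bi t))"
    using prodT_carrier[OF Tdim g(1)] g by simp
  have C2: "T e \<in> carrier_mat (length (vs ! bi t)) (length (vs ! bi s))"
    using Tdim[of e] e by simp
  have nG: "nn (prodT T \<gamma>)" using prodT_nn[OF Tdim Tnn g(1) g(3)] .
  have "0 < prodT T \<gamma> $$ (lq, lt) * T e $$ (lt, ls)"
    using g(6) e(4) unfolding lq_def lt_def ls_def by simp
  also have "\<dots> \<le> (\<Sum>k<length (vs ! bi t). prodT T \<gamma> $$ (lq, k) * T e $$ (k, ls))"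
    using lt lq ls nG Tnn[of e] C1 C2 unfolding nn_def
    by (intro member_le_sum[where f="\<lambda>k. prodT T \<gamma> $$ (lq, k) * T e $$ (k, ls)"]) auto
  also have "\<dots> = prodT T (\<gamma> @ [e]) $$ (lq, ls)"
    unfolding prod using mult_entry[OF C1 C2 lq ls] by simp
  finally have pos: "prodT T (\<gamma> @ [e]) $$ (lq, ls) > 0" .
  have ch: "chain (\<gamma> @ [e])" using g e by (intro chain_append) auto
  show ?case
    apply (rule exI[of _ "\<gamma> @ [e]"])
    using g e ch pos unfolding lq_def ls_def by auto
qed

end

context setting begin

lemma glue:
  assumes "\<eta>1 \<noteq> []" "\<eta>2 \<noteq> []" "chain \<eta>1" "chain \<eta>2" "chain \<gamma>"
    and "\<gamma> = [] \<and> etgt (last \<eta>1) = esrc (hd \<eta>2) \<or>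
         \<gamma> \<noteq> [] \<and> esrc (hd \<gamma>) = etgt (last \<eta>1) \<and> etgt (last \<gamma>) = esrc (hd \<eta>2)"
  shows "chain (\<eta>1 @ \<gamma> @ \<eta>2) \<and> prodT T (\<eta>1 @ \<gamma> @ \<eta>2) = prodT T \<eta>1 * prodT T (\<gamma> @ \<eta>2) \<and>
     prodT T (\<eta>1 @ \<gamma> @ \<eta>2) = prodT T (\<eta>1 @ \<gamma>) * prodT T \<eta>2 \<and>
     chain (\<gamma> @ \<eta>2) \<and> chain (\<eta>1 @ \<gamma>) \<and> esrc (hd (\<gamma> @ \<eta>2)) = etgt (last \<eta>1) \<and>
     etgt (last (\<eta>1 @ \<gamma>)) = esrc (hd \<eta>2)"
  using assms(6)
proof
  assume a: "\<gamma> = [] \<and> etgt (last \<eta>1) = esrc (hd \<eta>2)"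
  then show ?thesis using assms chain_append[of \<eta>1 \<eta>2] prodT_append[OF Tdim, of \<eta>1 \<eta>2] by simp
next
  assume a: "\<gamma> \<noteq> [] \<and> esrc (hd \<gamma>) = etgt (last \<eta>1) \<and> etgt (last \<gamma>) = esrc (hd \<eta>2)"
  have c1: "chain (\<gamma> @ \<eta>2)" using a assms by (intro chain_append) auto
  have c2: "chain (\<eta>1 @ \<gamma>)" using a assms by (intro chain_append) auto
  have c3: "chain (\<eta>1 @ (\<gamma> @ \<eta>2))" using a assms c1 by (intro chain_append) auto
  have p1: "prodT T (\<eta>1 @ (\<gamma> @ \<eta>2)) = prodT T \<eta>1 * prodT T (\<gamma> @ \<eta>2)"
    using a assms c1 by (intro prodT_append[OF Tdim]) auto
  have p2: "prodT T ((\<eta>1 @ \<gamma>) @ \<eta>2) = prodT T (\<eta>1 @ \<gamma>) * prodT T \<eta>2"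
    using a assms c2 by (intro prodT_append[OF Tdim]) auto
  show ?thesis using c1 c2 c3 p1 p2 a by simp
qed

end

lemma tmat_dim: "tmat r d p Phi e \<in> carrier_mat (length (esrc e)) (length (etgt e))"
  unfolding tmat_def Let_def esrc_def etgt_def by simp

lemma tmat_nn:
  assumes "\<forall>i. p i > 0"
  shows "nn (tmat r d p Phi e)"
proof -
  have pw: "pword p w \<ge> 0" for w
    unfolding pword_def using assms by (intro prod_list_nonneg) (auto simp: less_imp_le)
  show ?thesis
    unfolding nn_def tmat_def Let_def fmu01_def
    by (auto intro!: mult_nonneg_nonneg divide_nonneg_nonneg sum_nonneg pw)
qed

theorem lemma4p5:
  fixes r d p :: "'i::finite \<Rightarrow> real"
    and lo :: "aff rel"
    and Phi :: "aff list \<Rightarrow> 'i list set list"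
    and W :: "aff list set"
    and vs :: "aff list list"
  assumes "wifs r d p"
    and "\<not> (\<exists>x. ssset r d = {x})"
    and "convex hull (ssset r d) = {0..1}"
    and "strict_linear_order lo"
    and "iteration_rule r d lo Phi"
    and "FNC r d lo Phi"
    and "loop_class (tg_vertices r d lo Phi) (tg_edges r d lo Phi) W"
    and "distinct vs" and "set vs = W"
    and "irreducible_mat (block_matrix (tg_edges r d lo Phi) (tmat r d p Phi) vs)"
  shows "irreducible_loop_class (tg_edges r d lo Phi) (tmat r d p Phi) W"
proof -
  define E where "E = tg_edges r d lo Phi"
  define T where "T = tmat r d p Phi"
  have pp: "\<forall>i. p i > 0" using assms(1) unfolding wifs_def by simp
  interpret setting E T vs
    by unfold_locales (auto simp: T_def tmat_dim tmat_nn[OF pp])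
  have Wv: "W = set vs" using assms(9) by simp
  have irr: "irreducible_mat M" using assms(10) unfolding E_def T_def .
  have sc: "strongly_connected E W" using assms(7) unfolding loop_class_def E_def by simp
  define lq where "lq q = q - off (bi q)" for q
  define P where "P q s \<gamma> \<longleftrightarrow> \<gamma> \<noteq> [] \<and> set \<gamma> \<subseteq> E \<and> chain \<gamma> \<and> esrc (hd \<gamma>) = vs ! bi q \<and>
     etgt (last \<gamma>) = vs ! bi s \<and> prodT T \<gamma> $$ (lq q, lq s) > 0" for q s \<gamma>
  have exP: "\<exists>\<gamma>. P q s \<gamma>" if "q < N" "s < N" for q s
  proof -
    have "dim_row M = N" using block_carrier[of E T vs] by simp
    then have "\<exists>n\<ge>1. (M ^\<^sub>m n) $$ (q, s) > 0" using irr that unfolding irreducible_mat_def by simp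
    then obtain n where "n \<ge> 1" "(M ^\<^sub>m n) $$ (q, s) > 0" by blast
    then have "(M ^\<^sub>m Suc (n - 1)) $$ (q, s) > 0" by simp
    from path_lemma[OF that this] show ?thesis unfolding P_def lq_def by blast
  qed
  define Hf where "Hf q s = (SOME \<gamma>. P q s \<gamma>)" for q s
  have HfP: "P q s (Hf q s)" if "q < N" "s < N" for q s
    unfolding Hf_def using exP[OF that] by (rule someI_ex)
  define Q where "Q u w \<gamma> \<longleftrightarrow> set \<gamma> \<subseteq> E \<and> chain \<gamma> \<and> (\<gamma> = [] \<and> u = w \<or>
     \<gamma> \<noteq> [] \<and> esrc (hd \<gamma>) = u \<and> etgt (last \<gamma>) = w)" for u w \<gamma>
  have exQ: "\<exists>\<gamma>. Q u w \<gamma>" if "u \<in> W" "w \<in> W" for u w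
  proof (cases "u = w")
    case True then show ?thesis unfolding Q_def by (intro exI[of _ "[]"]) auto
  next
    case False
    have "u = w \<or> (\<exists>es. es \<noteq> [] \<and> is_path (induced_edges E W) es \<and> esrc (hd es) = u \<and> etgt (last es) = w)"
      using sc[unfolded strongly_connected_def, rule_format, OF that] .
    then obtain es where es: "es \<noteq> []" "is_path (induced_edges E W) es" "esrc (hd es) = u" "etgt (last es) = w"
      using False by blast
    have "set es \<subseteq> E" "chain es" using es(2) unfolding is_path_chain induced_edges_def by auto
    then have "Q u w es" unfolding Q_def using es by simp
    then show ?thesis ..
  qed
  define Cf where "Cf u w = (SOME \<gamma>. Q u w \<gamma>)" for u w
  have CfQ: "Q u w (Cf u w)" if "u \<in> W" "w \<in> W" for u w
    unfolding Cf_def using exQ[OF that] by (rule someI_ex)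
  define H where "H = (\<lambda>(q, s). Hf q s) ` ({..<N} \<times> {..<N}) \<union> (\<lambda>(u, w). Cf u w) ` (W \<times> W)"
  define \<kappa> where "\<kappa> q s = prodT T (Hf q s) $$ (lq q, lq s)" for q s
  define C where "C = 1 + (\<Sum>(q, s)\<in>{..<N} \<times> {..<N}. mnorm (prodT T (Hf q s)) + real N * real N / \<kappa> q s)"
  have term_nn: "mnorm (prodT T (Hf q s)) \<ge> 0 \<and> \<kappa> q s > 0" if "q < N" "s < N" for q s
    using HfP[OF that] prodT_nn[OF Tdim Tnn] nn_mnorm unfolding P_def \<kappa>_def by blast
  have tnn2: "0 \<le> mnorm (prodT T (Hf q s)) + real N * real N / \<kappa> q s" if "q < N" "s < N" for q s
    using term_nn[OF that] by (simp add: less_imp_le)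
  have Cge: "mnorm (prodT T (Hf q s)) + real N * real N / \<kappa> q s \<le> C - 1" if "q < N" "s < N" for q s
  proof -
    have "(\<lambda>(q, s). mnorm (prodT T (Hf q s)) + real N * real N / \<kappa> q s) (q, s)
      \<le> (\<Sum>(q, s)\<in>{..<N} \<times> {..<N}. mnorm (prodT T (Hf q s)) + real N * real N / \<kappa> q s)"
      by (rule member_le_sum) (use that in \<open>auto intro: tnn2\<close>)
    then show ?thesis unfolding C_def by simp
  qed
  have C1: "C \<ge> 1" unfolding C_def by (auto intro!: sum_nonneg tnn2)
  have finH: "finite H" unfolding H_def Wv by simp
  have pathH: "\<forall>\<gamma>\<in>H. is_path E \<gamma>"
  proof
    fix \<gamma> assume "\<gamma> \<in> H"
    then consider q s where "q < N" "s < N" "\<gamma> = Hf q s" | u w where "u \<in> W" "w \<in> W" "\<gamma> = Cf u w"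
      unfolding H_def by auto
    then show "is_path E \<gamma>"
    proof cases
      case 1 then show ?thesis using HfP[of q s] unfolding P_def is_path_chain by blast
    next
      case 2 then show ?thesis using CfQ[of u w] unfolding Q_def is_path_chain by blast
    qed
  qed
  have main: "\<exists>\<gamma>\<in>H. is_path E (\<eta>1 @ \<gamma> @ \<eta>2) \<and>
             mnorm (prodT T \<eta>1) * mnorm (prodT T \<eta>2) / C \<le> mnorm (prodT T (\<eta>1 @ \<gamma> @ \<eta>2)) \<and>
             mnorm (prodT T (\<eta>1 @ \<gamma> @ \<eta>2)) \<le> C * mnorm (prodT T \<eta>1) * mnorm (prodT T \<eta>2)"
    if h: "\<eta>1 \<noteq> [] \<and> \<eta>2 \<noteq> [] \<and> is_path (induced_edges E W) \<eta>1 \<and> is_path (induced_edges E W) \<eta>2"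
    for \<eta>1 \<eta>2
  proof -
    have n1: "\<eta>1 \<noteq> []" and n2: "\<eta>2 \<noteq> []" using h by auto
    have ch1: "chain \<eta>1" and ch2: "chain \<eta>2" and s1: "set \<eta>1 \<subseteq> induced_edges E W" and s2: "set \<eta>2 \<subseteq> induced_edges E W"
      using h unfolding is_path_chain by auto
    have sE1: "set \<eta>1 \<subseteq> E" and sE2: "set \<eta>2 \<subseteq> E" using s1 s2 unfolding induced_edges_def by auto
    define u where "u = etgt (last \<eta>1)"
    define w where "w = esrc (hd \<eta>2)"
    have uW: "u \<in> W" using subsetD[OF s1 last_in_set[OF n1]] unfolding u_def induced_edges_def by simp
    have wW: "w \<in> W" using subsetD[OF s2 hd_in_set[OF n2]] unfolding w_def induced_edges_def by simp
    define A where "A = prodT T \<eta>1"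
    define B where "B = prodT T \<eta>2"
    define pa where "pa = length u"
    define pb where "pb = length w"
    define m1 where "m1 = length (esrc (hd \<eta>1))"
    define l2 where "l2 = length (etgt (last \<eta>2))"
    have Ac: "A \<in> carrier_mat m1 pa" unfolding A_def m1_def pa_def u_def by (rule prodT_carrier[OF Tdim n1])
    have Bc: "B \<in> carrier_mat pb l2" unfolding B_def l2_def pb_def w_def by (rule prodT_carrier[OF Tdim n2])
    have An: "nn A" unfolding A_def by (rule prodT_nn[OF Tdim Tnn n1 ch1])
    have Bn: "nn B" unfolding B_def by (rule prodT_nn[OF Tdim Tnn n2 ch2])
    have mAn: "mnorm A \<ge> 0" "mnorm B \<ge> 0" using An Bn nn_mnorm by auto
    have gl: "chain (\<eta>1 @ \<gamma> @ \<eta>2) \<and> prodT T (\<eta>1 @ \<gamma> @ \<eta>2) = A * prodT T (\<gamma> @ \<eta>2) \<and>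
       prodT T (\<eta>1 @ \<gamma> @ \<eta>2) = prodT T (\<eta>1 @ \<gamma>) * B \<and>
       chain (\<gamma> @ \<eta>2) \<and> chain (\<eta>1 @ \<gamma>) \<and> esrc (hd (\<gamma> @ \<eta>2)) = u \<and> etgt (last (\<eta>1 @ \<gamma>)) = w"
      if "chain \<gamma>" "\<gamma> = [] \<and> u = w \<or> \<gamma> \<noteq> [] \<and> esrc (hd \<gamma>) = u \<and> etgt (last \<gamma>) = w" for \<gamma>
      using glue[OF n1 n2 ch1 ch2 that(1)] that(2) unfolding A_def B_def u_def w_def by blast
    show ?thesis
    proof (cases "pa = 0 \<or> pb = 0")
      case True
      define \<gamma> where "\<gamma> = Cf u w"
      have Q: "Q u w \<gamma>" unfolding \<gamma>_def by (rule CfQ[OF uW wW])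
      have gH: "\<gamma> \<in> H" unfolding H_def \<gamma>_def using uW wW by auto
      have G: "chain (\<eta>1 @ \<gamma> @ \<eta>2) \<and> prodT T (\<eta>1 @ \<gamma> @ \<eta>2) = A * prodT T (\<gamma> @ \<eta>2) \<and>
       prodT T (\<eta>1 @ \<gamma> @ \<eta>2) = prodT T (\<eta>1 @ \<gamma>) * B \<and>
       chain (\<gamma> @ \<eta>2) \<and> chain (\<eta>1 @ \<gamma>) \<and> esrc (hd (\<gamma> @ \<eta>2)) = u \<and> etgt (last (\<eta>1 @ \<gamma>)) = w"
        using gl Q unfolding Q_def by blast
      have path: "is_path E (\<eta>1 @ \<gamma> @ \<eta>2)" using G Q sE1 sE2 unfolding is_path_chain Q_def by auto
      have z: "mnorm (prodT T (\<eta>1 @ \<gamma> @ \<eta>2)) = 0 \<and> mnorm A * mnorm B = 0"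
      proof (cases "pa = 0")
        case True
        have Xc: "prodT T (\<gamma> @ \<eta>2) \<in> carrier_mat pa l2"
          using prodT_carrier[OF Tdim, of "\<gamma> @ \<eta>2"] n2 G unfolding pa_def l2_def by simp
        have "mnorm A = 0" using Ac True by (simp add: mnorm_col)
        moreover have "prodT T (\<eta>1 @ \<gamma> @ \<eta>2) = A * prodT T (\<gamma> @ \<eta>2)" using G by blast
        moreover have "mnorm (A * prodT T (\<gamma> @ \<eta>2)) = 0" using mnorm_mult[OF Ac Xc] True by simp
        ultimately show ?thesis by simp
      next
        case False
        then have pb0: "pb = 0" using \<open>pa = 0 \<or> pb = 0\<close> by simp
        have Yc: "prodT T (\<eta>1 @ \<gamma>) \<in> carrier_mat m1 pb"
          using prodT_carrier[OF Tdim, of "\<eta>1 @ \<gamma>"] n1 G unfolding pb_def m1_def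
          by (cases "\<gamma> = []") auto
        have "mnorm B = 0" using Bc pb0 by (simp add: mnorm_row)
        moreover have "prodT T (\<eta>1 @ \<gamma> @ \<eta>2) = prodT T (\<eta>1 @ \<gamma>) * B" using G by blast
        moreover have "mnorm (prodT T (\<eta>1 @ \<gamma>) * B) = 0" using mnorm_mult[OF Yc Bc] pb0 by simp
        ultimately show ?thesis by simp
      qed
      show ?thesis using gH path z C1 unfolding A_def B_def by (intro bexI[of _ \<gamma>]) auto
    next
      case False
      then have pa0: "pa > 0" and pb0: "pb > 0" by auto
      obtain a where a: "a < length vs" "vs ! a = u" using uW Wv by (auto simp: in_set_conv_nth)
      obtain a' where a': "a' < length vs" "vs ! a' = w" using wW Wv by (auto simp: in_set_conv_nth)
      define b where "b = (SOME b. b < pa \<and> (\<forall>b'<pa. colS A b' \<le> colS A b))"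
      have "\<exists>b. b < pa \<and> (\<forall>b'<pa. colS A b' \<le> colS A b)"
      proof -
        have "Max (colS A ` {..<pa}) \<in> colS A ` {..<pa}" using pa0 by (intro Max_in) auto
        then obtain b where "b < pa" "colS A b = Max (colS A ` {..<pa})" by auto
        then show ?thesis by (intro exI[of _ b]) auto
      qed
      then have "b < pa \<and> (\<forall>b'<pa. colS A b' \<le> colS A b)" unfolding b_def by (rule someI_ex)
      then have b: "b < pa" "\<And>b'. b' < pa \<Longrightarrow> colS A b' \<le> colS A b" by auto
      define c where "c = (SOME c. c < pb \<and> (\<forall>c'<pb. rowS B c' \<le> rowS B c))"
      have "\<exists>c. c < pb \<and> (\<forall>c'<pb. rowS B c' \<le> rowS B c)"
      proof -
        have "Max (rowS B ` {..<pb}) \<in> rowS B ` {..<pb}" using pb0 by (intro Max_in) auto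
        then obtain c where "c < pb" "rowS B c = Max (rowS B ` {..<pb})" by auto
        then show ?thesis by (intro exI[of _ c]) auto
      qed
      then have "c < pb \<and> (\<forall>c'<pb. rowS B c' \<le> rowS B c)" unfolding c_def by (rule someI_ex)
      then have c: "c < pb" "\<And>c'. c' < pb \<Longrightarrow> rowS B c' \<le> rowS B c" by auto
      define q where "q = off a + b"
      define s where "s = off a' + c"
      have bl: "b < length (vs ! a)" using b a unfolding pa_def by simp
      have cl: "c < length (vs ! a')" using c a' unfolding pb_def by simp
      have qN: "q < N" unfolding q_def using blk_at_lt[OF a(1) bl] .
      have sN: "s < N" unfolding s_def using blk_at_lt[OF a'(1) cl] .
      have biq: "bi q = a" unfolding q_def using blk_idx_at[OF a(1) bl] .
      have bis: "bi s = a'" unfolding s_def using blk_idx_at[OF a'(1) cl] .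
      have lqq: "lq q = b" "lq s = c" using biq bis unfolding lq_def by (auto simp: q_def s_def)
      define \<gamma> where "\<gamma> = Hf q s"
      have P: "P q s \<gamma>" unfolding \<gamma>_def by (rule HfP[OF qN sN])
      have gH: "\<gamma> \<in> H" unfolding H_def \<gamma>_def using qN sN by auto
      have gn: "\<gamma> \<noteq> []" "chain \<gamma>" "esrc (hd \<gamma>) = u" "etgt (last \<gamma>) = w" "set \<gamma> \<subseteq> E"
        using P a a' unfolding P_def biq bis by auto
      define G where "G = prodT T \<gamma>"
      have kap: "G $$ (b, c) = \<kappa> q s" unfolding G_def \<kappa>_def \<gamma>_def lqq ..
      have kpos: "\<kappa> q s > 0" using term_nn[OF qN sN] by simp
      have Gc: "G \<in> carrier_mat pa pb" unfolding G_def pa_def pb_def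
        using prodT_carrier[OF Tdim gn(1)] gn by simp
      have Gn: "nn G" unfolding G_def by (rule prodT_nn[OF Tdim Tnn gn(1,2)])
      have Cg: "mnorm G + real N * real N / \<kappa> q s \<le> C - 1" unfolding G_def \<gamma>_def by (rule Cge[OF qN sN])
      have GG: "chain (\<eta>1 @ \<gamma> @ \<eta>2) \<and> prodT T (\<eta>1 @ \<gamma> @ \<eta>2) = prodT T (\<eta>1 @ \<gamma>) * B \<and> chain (\<eta>1 @ \<gamma>)"
        using gl[of \<gamma>] gn by blast
      have path: "is_path E (\<eta>1 @ \<gamma> @ \<eta>2)" using GG gn sE1 sE2 unfolding is_path_chain by auto
      have AG: "prodT T (\<eta>1 @ \<gamma>) = A * G"
        unfolding A_def G_def using GG gn ch1 n1 by (intro prodT_append[OF Tdim]) (auto simp: u_def)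
      have AGc: "A * G \<in> carrier_mat m1 pb" using Ac Gc by simp
      have AGn: "nn (A * G)" by (rule nn_mult[OF Ac Gc An Gn])
      define whole where "whole = mnorm (prodT T (\<eta>1 @ \<gamma> @ \<eta>2))"
      have wh: "whole = (\<Sum>c'<pb. (\<Sum>b'<pa. colS A b' * G $$ (b', c')) * rowS B c')"
        unfolding whole_def using GG AG mnorm_mult[OF AGc Bc] colS_mult[OF Ac Gc] by simp
      have colA: "\<And>b'. b' < pa \<Longrightarrow> colS A b' \<ge> 0" using An Ac nn_colS by auto
      have rowB: "\<And>c'. c' < pb \<Longrightarrow> rowS B c' \<ge> 0" using Bn Bc nn_rowS by auto
      have Gent: "\<And>b' c'. b' < pa \<Longrightarrow> c' < pb \<Longrightarrow> 0 \<le> G $$ (b', c') \<and> G $$ (b', c') \<le> mnorm G"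
        using Gn Gc nn_entry_le_mnorm unfolding nn_def by auto
      have mA: "mnorm A = (\<Sum>b'<pa. colS A b')" using Ac by (simp add: mnorm_col)
      have mB: "mnorm B = (\<Sum>c'<pb. rowS B c')" using Bc by (simp add: mnorm_row)
      have up: "whole \<le> mnorm G * mnorm A * mnorm B"
      proof -
        have "whole \<le> (\<Sum>c'<pb. (\<Sum>b'<pa. colS A b' * mnorm G) * rowS B c')"
          unfolding wh using colA rowB Gent
          by (intro sum_mono mult_right_mono mult_left_mono) auto
        also have "\<dots> = mnorm G * mnorm A * mnorm B"
          unfolding mA mB by (simp add: sum_distrib_left sum_distrib_right mult_ac sum.swap[of _ "{..<pb}"])
        finally show ?thesis .
      qed
      have lo1: "(\<Sum>b'<pa. colS A b' * G $$ (b', c)) * rowS B c \<le> whole"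
        unfolding wh using colA rowB Gent c(1)
        by (intro member_le_sum[where f="\<lambda>c'. (\<Sum>b'<pa. colS A b' * G $$ (b', c')) * rowS B c'"])
           (auto intro!: mult_nonneg_nonneg sum_nonneg)
      have lo2: "colS A b * G $$ (b, c) \<le> (\<Sum>b'<pa. colS A b' * G $$ (b', c))"
        using colA Gent c(1) b(1)
        by (intro member_le_sum[where f="\<lambda>b'. colS A b' * G $$ (b', c)"]) auto
      have lo: "colS A b * \<kappa> q s * rowS B c \<le> whole"
      proof -
        have "colS A b * \<kappa> q s * rowS B c = (colS A b * G $$ (b, c)) * rowS B c" using kap by simp
        also have "\<dots> \<le> (\<Sum>b'<pa. colS A b' * G $$ (b', c)) * rowS B c"
          by (rule mult_right_mono[OF lo2 rowB[OF c(1)]])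
        also have "\<dots> \<le> whole" by (rule lo1)
        finally show ?thesis .
      qed
      have "length u \<in> set (map length vs)" using uW Wv by simp
      then have "length u \<le> N" by (intro member_le_sum_list) auto
      then have paN: "real pa \<le> real N" unfolding pa_def by simp
      have "length w \<in> set (map length vs)" using wW Wv by simp
      then have "length w \<le> N" by (intro member_le_sum_list) auto
      then have pbN: "real pb \<le> real N" unfolding pb_def by simp
      have al: "mnorm A \<le> real N * colS A b"
      proof -
        have "mnorm A \<le> (\<Sum>b'<pa. colS A b)" unfolding mA using b by (intro sum_mono) auto
        also have "\<dots> = real pa * colS A b" by simp
        also have "\<dots> \<le> real N * colS A b" using paN colA[OF b(1)] by (intro mult_right_mono) auto
        finally show ?thesis .
      qed
      have bl2: "mnorm B \<le> real N * rowS B c"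
      proof -
        have "mnorm B \<le> (\<Sum>c'<pb. rowS B c)" unfolding mB using c by (intro sum_mono) auto
        also have "\<dots> = real pb * rowS B c" by simp
        also have "\<dots> \<le> real N * rowS B c" using pbN rowB[OF c(1)] by (intro mult_right_mono) auto
        finally show ?thesis .
      qed
      have mGn: "mnorm G \<ge> 0" using Gn nn_mnorm by auto
      have CK: "real N * real N \<le> C * \<kappa> q s"
      proof -
        have "real N * real N / \<kappa> q s \<le> C" using Cg mGn by linarith
        then show ?thesis using kpos by (simp add: divide_le_eq)
      qed
      have Cpos: "C > 0" using C1 by simp
      have low: "mnorm A * mnorm B / C \<le> whole"
      proof -
        have "mnorm A * mnorm B \<le> (real N * colS A b) * (real N * rowS B c)"
          using al bl2 mAn by (intro mult_mono) auto
        also have "\<dots> = (real N * real N) * (colS A b * rowS B c)" by (simp add: mult_ac)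
        also have "\<dots> \<le> (C * \<kappa> q s) * (colS A b * rowS B c)"
          using CK colA[OF b(1)] rowB[OF c(1)] by (intro mult_right_mono) auto
        also have "\<dots> = C * (colS A b * \<kappa> q s * rowS B c)" by (simp add: mult_ac)
        also have "\<dots> \<le> C * whole" using lo Cpos by simp
        finally show ?thesis using Cpos by (simp add: divide_le_eq mult.commute)
      qed
      have upp: "whole \<le> C * mnorm A * mnorm B"
      proof -
        have "real N * real N / \<kappa> q s \<ge> 0" using kpos by (simp add: less_imp_le)
        then have "mnorm G \<le> C" using Cg by linarith
        then have "mnorm G * (mnorm A * mnorm B) \<le> C * (mnorm A * mnorm B)"
          using mAn by (intro mult_right_mono) auto
        then show ?thesis using up by (simp add: mult_ac)
      qed
      show ?thesis using gH path low upp unfolding whole_def A_def B_def by (intro bexI[of _ \<gamma>]) auto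
    qed
  qed
  show ?thesis
    unfolding irreducible_loop_class_def E_def[symmetric] T_def[symmetric]
    using finH pathH C1 main by (intro exI[of _ H] exI[of _ C]) auto
qed

end
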